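(* Let $t\ge 2$, let $n_1,\dots,n_t$ be positive integers, and let $G=K_{n_1,\dots,n_t}$ be the complete $t$-partite graph with partite sets $V_1,\dots,V_t$, $|V_i|=n_i$. Let $N_t=\{1,\dots,t\}$ and $f(I)=\sum_{i\in I}n_i$ for $I\subseteq N_t$. Let $p$ be a positive integer with $f(N_t)>p$. Then $$\gamma_p(G)\le \min\{f(I): I\subseteq N_t,\ f(I)\ge p\},$$ with equality if $G$ has a $\gamma_p(G)$-set $D$ with $f(I_D)\ge p$.
   Context: A set $S\subseteq V(G)$ is a $p$-dominating set of $G$ if every vertex $v\in V(G)\setminus S$ has at least $p$ neighbors in $S$. The $p$-domination number $\gamma_p(G)$ is the minimum cardinality of a $p$-dominating set of $G$, and a $\gamma_p(G)$-set is a $p$-dominating set of cardinality $\gamma_p(G)$. For $D\subseteq V(G)$ write $D_i=V_i\cap D$ for $i\in N_t$ and $I_D=\{i\in N_t: |D_i|=|V_i|\}$. *)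

theory Defs
  imports Main
begin

definition p_dominating :: "'a set \<Rightarrow> ('a \<Rightarrow> 'a \<Rightarrow> bool) \<Rightarrow> nat \<Rightarrow> 'a set \<Rightarrow> bool" where
  "p_dominating V E p S \<longleftrightarrow> S \<subseteq> V \<and> (\<forall>v \<in> V - S. card {u \<in> S. E v u} \<ge> p)"

definition gamma_p :: "'a set \<Rightarrow> ('a \<Rightarrow> 'a \<Rightarrow> bool) \<Rightarrow> nat \<Rightarrow> nat" where
  "gamma_p V E p = Min (card ` {S. p_dominating V E p S})"

definition gamma_p_set :: "'a set \<Rightarrow> ('a \<Rightarrow> 'a \<Rightarrow> bool) \<Rightarrow> nat \<Rightarrow> 'a set \<Rightarrow> bool" where
  "gamma_p_set V E p D \<longleftrightarrow> p_dominating V E p D \<and> card D = gamma_p V E p"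

text \<open>Complete t-partite graph K_{n_1,...,n_t}: vertex (i,j) lies in part V_i,
  i \<in> {1..t}, j < n i; two vertices are adjacent iff they lie in different parts.\<close>

definition cmp_V :: "nat \<Rightarrow> (nat \<Rightarrow> nat) \<Rightarrow> (nat \<times> nat) set" where
  "cmp_V t n = {(i, j). i \<in> {1..t} \<and> j < n i}"

definition cmp_E :: "nat \<times> nat \<Rightarrow> nat \<times> nat \<Rightarrow> bool" where
  "cmp_E u v \<longleftrightarrow> fst u \<noteq> fst v"

definition cmp_part :: "nat \<Rightarrow> (nat \<Rightarrow> nat) \<Rightarrow> nat \<Rightarrow> (nat \<times> nat) set" where
  "cmp_part t n i = {v \<in> cmp_V t n. fst v = i}"

definition full_parts :: "nat \<Rightarrow> (nat \<Rightarrow> nat) \<Rightarrow> (nat \<times> nat) set \<Rightarrow> nat set" where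
  "full_parts t n D = {i \<in> {1..t}. card (D \<inter> cmp_part t n i) = card (cmp_part t n i)}"

end

theory Submission
  imports Defs
begin

lemma V_eq: "cmp_V t n = Sigma {1..t} (\<lambda>i. {..<n i})"
  unfolding cmp_V_def by auto

lemma part_eq: "i \<in> {1..t} \<Longrightarrow> cmp_part t n i = {i} \<times> {..<n i}"
  unfolding cmp_part_def cmp_V_def by auto

lemma finV: "finite (cmp_V t n)"
  unfolding V_eq by auto

lemma gamma_le:
  assumes "p_dominating (cmp_V t n) cmp_E p S"
  shows "gamma_p (cmp_V t n) cmp_E p \<le> card S"
proof -
  have "finite {S. p_dominating (cmp_V t n) cmp_E p S}"
    by (rule finite_subset[of _ "Pow (cmp_V t n)"]) (auto simp: p_dominating_def finV)
  thus ?thesis unfolding gamma_p_def using assms by (intro Min_le) auto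
qed

theorem lemma2:
  fixes t p :: nat and n :: "nat \<Rightarrow> nat"
  assumes "t \<ge> 2"
    and "\<forall>i \<in> {1..t}. n i > 0"
    and "p > 0"
    and "(\<Sum>i\<in>{1..t}. n i) > p"
  shows "gamma_p (cmp_V t n) cmp_E p \<le> Min {sum n I | I. I \<subseteq> {1..t} \<and> sum n I \<ge> p}
    \<and> ((\<exists>D. gamma_p_set (cmp_V t n) cmp_E p D \<and> sum n (full_parts t n D) \<ge> p) \<longrightarrow>
         gamma_p (cmp_V t n) cmp_E p = Min {sum n I | I. I \<subseteq> {1..t} \<and> sum n I \<ge> p})"
proof -
  let ?M = "{sum n I | I. I \<subseteq> {1..t} \<and> sum n I \<ge> p}"
  have fin: "finite ?M"
  proof -
    have "?M \<subseteq> sum n ` Pow {1..t}" by auto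
    thus ?thesis by (rule finite_subset) auto
  qed
  have ne: "?M \<noteq> {}" using assms(4) by auto
  have upper: "gamma_p (cmp_V t n) cmp_E p \<le> Min ?M"
  proof -
    have "Min ?M \<in> ?M" using fin ne by (rule Min_in)
    then obtain I where I: "I \<subseteq> {1..t}" "sum n I \<ge> p" "Min ?M = sum n I" by auto
    let ?S = "Sigma I (\<lambda>i. {..<n i})"
    have finI: "finite I" using I(1) finite_subset by blast
    have cS: "card ?S = sum n I" using finI by (simp add: card_SigmaI)
    have "p_dominating (cmp_V t n) cmp_E p ?S"
      unfolding p_dominating_def
    proof (intro conjI ballI)
      show "?S \<subseteq> cmp_V t n" using I(1) unfolding V_eq by auto
    next
      fix v assume v: "v \<in> cmp_V t n - ?S"
      then have "fst v \<notin> I" unfolding V_eq by auto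
      then have "{u \<in> ?S. cmp_E v u} = ?S" unfolding cmp_E_def by auto
      thus "card {u \<in> ?S. cmp_E v u} \<ge> p" using cS I(2) by simp
    qed
    hence "gamma_p (cmp_V t n) cmp_E p \<le> card ?S" by (rule gamma_le)
    thus ?thesis using cS I(3) by simp
  qed
  have lower: "gamma_p (cmp_V t n) cmp_E p \<ge> Min ?M"
    if D: "gamma_p_set (cmp_V t n) cmp_E p D" "sum n (full_parts t n D) \<ge> p" for D
  proof -
    let ?F = "full_parts t n D"
    have F: "?F \<subseteq> {1..t}" unfolding full_parts_def by auto
    have DV: "D \<subseteq> cmp_V t n" using D(1) unfolding gamma_p_set_def p_dominating_def by auto
    have finD: "finite D" using DV finV finite_subset by blast
    have sub: "Sigma ?F (\<lambda>i. {..<n i}) \<subseteq> D"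
    proof
      fix x assume x: "x \<in> Sigma ?F (\<lambda>i. {..<n i})"
      then obtain i j where ij: "x = (i,j)" "i \<in> ?F" "j < n i" by auto
      have i1: "i \<in> {1..t}" using ij(2) F by auto
      have c: "card (D \<inter> cmp_part t n i) = card (cmp_part t n i)"
        using ij(2) unfolding full_parts_def by auto
      have fp: "finite (cmp_part t n i)" using part_eq[OF i1] by simp
      have "D \<inter> cmp_part t n i = cmp_part t n i"
        by (rule card_subset_eq[OF fp]) (use c in auto)
      moreover have "x \<in> cmp_part t n i" using ij part_eq[OF i1] by auto
      ultimately show "x \<in> D" by auto
    qed
    have finF: "finite ?F" using F finite_subset by blast
    have "sum n ?F = card (Sigma ?F (\<lambda>i. {..<n i}))" using finF by (simp add: card_SigmaI)
    also have "\<dots> \<le> card D" using card_mono[OF finD sub] .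
    also have "\<dots> = gamma_p (cmp_V t n) cmp_E p" using D(1) unfolding gamma_p_set_def by simp
    finally have "sum n ?F \<le> gamma_p (cmp_V t n) cmp_E p" .
    moreover have "Min ?M \<le> sum n ?F" using fin F D(2) by (intro Min_le) auto
    ultimately show ?thesis by simp
  qed
  show ?thesis using upper lower by (auto intro: antisym)
qed

end
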